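(* Let $\beta>0$. Then there is no $\lambda\in\mathbb{C}$ with $\operatorname{Re}\lambda>-1$ and $\lambda\notin\{0,1\}$ for which there exists $0\ne\phi\in C^\infty[-1,1]$ solving \[ \Big(\lambda^2+\lambda-\frac{2\lambda(1+\beta)}{1+\beta+y(1-\beta)}\Big)\phi+\Big(2\lambda y+2y-\frac{2(1+\beta)y}{1+\beta+y(1-\beta)}-\frac{2(1-\beta)}{1+\beta+y(1-\beta)}\Big)\phi'+(y^2-1)\phi''=0. \] As a result, $U_{1,\beta,\kappa}$ is mode-stable for all $\beta>0$, $\kappa\in\mathbb{R}$.
   Context: $U_{1,\beta,\kappa}(s,y)=s-\log\big((1+y)+\beta(1-y)\big)+\log(1+\beta)+\kappa$ is a generalized self-similar solution of $\partial_{tt}u-\partial_{xx}u=(\partial_tu)^2-(\partial_xu)^2$ in self-similar variables $s=-\ln(T-t)$, $y=\frac{x-x_0}{T-t}$. The eigenvalues of its linearised operator $\mathbf{L}^2_{1,\beta}$ are the $\lambda\in\mathbb{C}$ for which the displayed ODE has a nonzero $C^\infty[-1,1]$ solution; mode-stable means every such eigenvalue has negative real part or equals $0$ or $1$. *)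

theory Defs
  imports "HOL-Analysis.Analysis"
begin

text \<open>Smooth functions on the closed interval [-1,1]: there is a chain of functions
  D 0 = phi, D 1, D 2, ... with D (Suc k) the derivative of D k (taken within [-1,1],
  i.e. one-sided at the endpoints) at every point of [-1,1].\<close>
definition smooth_chain_cl :: "(nat \<Rightarrow> real \<Rightarrow> complex) \<Rightarrow> bool" where
  "smooth_chain_cl D \<longleftrightarrow>
     (\<forall>k. \<forall>y\<in>{-1..1}. (D k has_vector_derivative D (Suc k) y) (at y within {-1..1}))"

definition eig_ode :: "real \<Rightarrow> complex \<Rightarrow> (real \<Rightarrow> complex) \<Rightarrow> (real \<Rightarrow> complex)
    \<Rightarrow> (real \<Rightarrow> complex) \<Rightarrow> real \<Rightarrow> bool" where
  "eig_ode \<beta> lam ph ph' ph'' y \<longleftrightarrow>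
     (let d = 1 + \<beta> + y * (1 - \<beta>) in
       (lam^2 + lam - 2 * lam * of_real (1 + \<beta>) / of_real d) * ph y
     + (2 * lam * of_real y + of_real (2 * y) - of_real (2 * (1 + \<beta>) * y / d)
          - of_real (2 * (1 - \<beta>) / d)) * ph' y
     + of_real (y^2 - 1) * ph'' y = 0)"

definition is_eigenvalue_L2 :: "real \<Rightarrow> complex \<Rightarrow> bool" where
  "is_eigenvalue_L2 \<beta> lam \<longleftrightarrow>
     (\<exists>D. smooth_chain_cl D \<and> (\<exists>y\<in>{-1..1}. D 0 y \<noteq> 0) \<and>
          (\<forall>y\<in>{-1..1}. eig_ode \<beta> lam (D 0) (D 1) (D 2) y))"

text \<open>Mode stability of U_{1,beta,kappa}; the linearised operator does not depend on kappa.\<close>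
definition mode_stable :: "real \<Rightarrow> real \<Rightarrow> bool" where
  "mode_stable \<beta> \<kappa> \<longleftrightarrow>
     (\<forall>lam. is_eigenvalue_L2 \<beta> lam \<longrightarrow> Re lam < 0 \<or> lam = 0 \<or> lam = 1)"

end

theory Submission
  imports Defs
begin

lemma der_zero:
  fixes F F' :: "real \<Rightarrow> complex"
  assumes "\<forall>y\<in>{-1..1}. (F has_vector_derivative F' y) (at y within {-1..1})"
    and "\<forall>y\<in>{-1..1}. F y = 0" and "x \<in> {-1..1::real}"
  shows "F' x = 0"
proof -
  have "(F has_vector_derivative 0) (at x within {-1..1})"
    by (rule has_vector_derivative_transform[where f="\<lambda>_. 0"]) (use assms in auto)
  moreover have "(F has_vector_derivative F' x) (at x within {-1..1})" using assms by auto
  ultimately show ?thesis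
    using vector_derivative_unique_within_closed_interval[of "-1" 1 x F "F' x" 0] assms(3) by auto
qed

lemma mono_zero_right:
  fixes f f' :: "real \<Rightarrow> complex"
  assumes der: "\<forall>y\<in>{-1..1}. (f has_vector_derivative f' y) (at y within {-1..1})"
    and eq: "\<forall>y\<in>{-1..1}. of_real (1-y) * f' y = c * f y"
    and c: "Re c > 0" and y: "y \<in> {-1..1}"
  shows "f y = 0"
proof -
  define h where "h = (\<lambda>y. Re (f y * cnj (f y)))"
  have c0: "c \<noteq> 0" using c by auto
  have f1: "f 1 = 0" using eq[rule_format, of 1] c0 by simp
  have cont: "continuous_on {-1..1} f" using der continuous_on_vector_derivative by blast
  have "continuous_on {y..1} h" unfolding h_def
    by (intro continuous_intros continuous_on_subset[OF cont]) (use y in auto)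
  moreover have "\<exists>D. DERIV h x :> D \<and> D \<ge> 0" if x: "y < x" "x < 1" for x
  proof -
    have xi: "x \<in> interior {-1..1::real}" using x y by auto
    have dx: "(f has_vector_derivative f' x) (at x)"
      using der[rule_format, of x] xi at_within_interior[OF xi] by (metis interior_subset subsetD)
    have "DERIV h x :> Re (f x * cnj (f' x) + f' x * cnj (f x))"
      unfolding h_def by (rule derivative_eq_intros dx refl | simp)+
    moreover have "Re (f x * cnj (f' x) + f' x * cnj (f x)) \<ge> 0"
    proof -
      have e: "of_real (1-x) * (f x * cnj (f' x) + f' x * cnj (f x)) = f x * cnj (c * f x) + c * f x * cnj (f x)"
        using eq[rule_format, of x] x y
        by (smt (verit, best) atLeastAtMost_iff complex_cnj_complex_of_real complex_cnj_mult mult.assoc mult.commute ring_class.ring_distribs(1))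
      have "Re (f x * cnj (c * f x) + c * f x * cnj (f x)) = 2 * Re c * (cmod (f x))^2"
      proof -
        have "f x * cnj (c * f x) + c * f x * cnj (f x) = (cnj c + c) * (f x * cnj (f x))"
          by (simp add: algebra_simps)
        also have "\<dots> = (cnj c + c) * of_real ((cmod (f x))^2)" by (simp only: complex_norm_square)
        finally show ?thesis by simp
      qed
      also have "\<dots> \<ge> 0" using c by simp
      finally have "(1-x) * Re (f x * cnj (f' x) + f' x * cnj (f x)) \<ge> 0"
        using arg_cong[OF e, of Re] by (simp add: Re_complex_of_real)
      then show ?thesis using x by (simp add: zero_le_mult_iff)
    qed
    ultimately show ?thesis by blast
  qed
  ultimately have "h y \<le> h 1" using DERIV_nonneg_imp_increasing_open[of y 1 h] y by auto
  then have "h y \<le> 0" using f1 by (simp add: h_def)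
  then have "(cmod (f y))^2 \<le> 0" by (simp add: h_def complex_norm_square[symmetric] del: complex_mult_cnj)
  then show ?thesis by simp
qed

lemma mono_zero_left:
  fixes f f' :: "real \<Rightarrow> complex"
  assumes der: "\<forall>y\<in>{-1..1}. (f has_vector_derivative f' y) (at y within {-1..1})"
    and eq: "\<forall>y\<in>{-1..1}. of_real (1+y) * f' y = c * f y"
    and c: "Re c < 0" and y: "y \<in> {-1..1}"
  shows "f y = 0"
proof -
  define h where "h = (\<lambda>y. Re (f y * cnj (f y)))"
  have c0: "c \<noteq> 0" using c by auto
  have f1: "f (-1) = 0" using eq[rule_format, of "-1"] c0 by simp
  have cont: "continuous_on {-1..1} f" using der continuous_on_vector_derivative by blast
  have "continuous_on {-1..y} h" unfolding h_def
    by (intro continuous_intros continuous_on_subset[OF cont]) (use y in auto)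
  moreover have "\<exists>D. DERIV h x :> D \<and> D \<le> 0" if x: "-1 < x" "x < y" for x
  proof -
    have xi: "x \<in> interior {-1..1::real}" using x y by auto
    have dx: "(f has_vector_derivative f' x) (at x)"
      using der[rule_format, of x] xi at_within_interior[OF xi] by (metis interior_subset subsetD)
    have "DERIV h x :> Re (f x * cnj (f' x) + f' x * cnj (f x))"
      unfolding h_def by (rule derivative_eq_intros dx refl | simp)+
    moreover have "Re (f x * cnj (f' x) + f' x * cnj (f x)) \<le> 0"
    proof -
      have e: "of_real (1+x) * (f x * cnj (f' x) + f' x * cnj (f x)) = f x * cnj (c * f x) + c * f x * cnj (f x)"
        using eq[rule_format, of x] x y
        by (smt (verit, best) atLeastAtMost_iff complex_cnj_complex_of_real complex_cnj_mult mult.assoc mult.commute ring_class.ring_distribs(1))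
      have "Re (f x * cnj (c * f x) + c * f x * cnj (f x)) = 2 * Re c * (cmod (f x))^2"
      proof -
        have "f x * cnj (c * f x) + c * f x * cnj (f x) = (cnj c + c) * (f x * cnj (f x))"
          by (simp add: algebra_simps)
        also have "\<dots> = (cnj c + c) * of_real ((cmod (f x))^2)" by (simp only: complex_norm_square)
        finally show ?thesis by simp
      qed
      also have "\<dots> \<le> 0" using c by (simp add: mult_nonpos_nonneg)
      finally have "(1+x) * Re (f x * cnj (f' x) + f' x * cnj (f x)) \<le> 0"
        using arg_cong[OF e, of Re] by (simp add: Re_complex_of_real)
      then show ?thesis using x by (simp add: mult_le_0_iff)
    qed
    ultimately show ?thesis by blast
  qed
  ultimately have "h (-1) \<ge> h y" using DERIV_nonpos_imp_decreasing_open[of "-1" y h] y by auto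
  then have "h y \<le> 0" using f1 by (simp add: h_def)
  then have "(cmod (f y))^2 \<le> 0" by (simp add: h_def complex_norm_square[symmetric] del: complex_mult_cnj)
  then show ?thesis by simp
qed

lemma ode_step:
  fixes Q :: "nat \<Rightarrow> real \<Rightarrow> complex"
  assumes ch: "\<forall>k. \<forall>y\<in>{-1..1}. (Q k has_vector_derivative Q (Suc k) y) (at y within {-1..1})"
  and ode: "\<forall>y\<in>{-1..1}. of_real (y^2-1) * Q (k+2) y + 2*\<mu>* of_real y * Q (k+1) y + \<mu> * (\<mu>-1) * Q k y = 0"
  shows "\<forall>y\<in>{-1..1}. of_real (y^2-1) * Q (k+3) y + 2*(\<mu>+1)* of_real y * Q (k+2) y + (\<mu>+1) * \<mu> * Q (k+1) y = 0"
proof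
  fix x :: real assume x: "x \<in> {-1..1}"
  have d: "\<forall>y\<in>{-1..1}. ((\<lambda>y. of_real (y^2-1) * Q (k+2) y + 2*\<mu>* of_real y * Q (k+1) y + \<mu> * (\<mu>-1) * Q k y)
     has_vector_derivative (of_real (y^2-1) * Q (k+3) y + 2*(\<mu>+1)* of_real y * Q (k+2) y + (\<mu>+1) * \<mu> * Q (k+1) y))
     (at y within {-1..1})"
  proof
    fix y :: real assume y: "y \<in> {-1..1}"
    have q: "\<And>j. (Q j has_vector_derivative Q (Suc j) y) (at y within {-1..1})" using ch y by auto
    show "((\<lambda>y. of_real (y^2-1) * Q (k+2) y + 2*\<mu>* of_real y * Q (k+1) y + \<mu> * (\<mu>-1) * Q k y)
     has_vector_derivative (of_real (y^2-1) * Q (k+3) y + 2*(\<mu>+1)* of_real y * Q (k+2) y + (\<mu>+1) * \<mu> * Q (k+1) y))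
     (at y within {-1..1})"
      by (rule derivative_eq_intros q refl | simp)+ (simp add: algebra_simps eval_nat_numeral)
  qed
  show "of_real (x^2-1) * Q (k+3) x + 2*(\<mu>+1)* of_real x * Q (k+2) x + (\<mu>+1) * \<mu> * Q (k+1) x = 0"
    by (rule der_zero[OF d ode x])
qed


lemma alg: fixes lam b z pa pb pc :: complex assumes "1 + b + z*(1-b) \<noteq> 0"
 shows "(z^2-1) * ((2*(1-b)) * pb + (1+b+z*(1-b))*pc) + 2*lam*z*((1-b)*pa + (1+b+z*(1-b))*pb) + lam*(lam-1)*((1+b+z*(1-b))*pa) = (1+b+z*(1-b)) * ((lam^2+lam - 2*lam*(1+b)/(1+b+z*(1-b)))*pa + (2*lam*z + 2*z - 2*(1+b)*z/(1+b+z*(1-b)) - 2*(1-b)/(1+b+z*(1-b)))*pb + (z^2-1)*pc)"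
proof -
  define d where "d = 1+b+z*(1-b)"
  have d: "d \<noteq> 0" using assms d_def by simp
  have "d * ((lam^2+lam - 2*lam*(1+b)/d)*pa + (2*lam*z + 2*z - 2*(1+b)*z/d - 2*(1-b)/d)*pb + (z^2-1)*pc)
    = d*(lam^2+lam)*pa - 2*lam*(1+b)*pa + (d*(2*lam*z + 2*z) - 2*(1+b)*z - 2*(1-b))*pb + d*(z^2-1)*pc"
    using d by (simp add: algebra_simps diff_divide_distrib add_divide_distrib)
  then show ?thesis unfolding d_def[symmetric] by (simp add: d_def algebra_simps power2_eq_square)
qed

theorem proposition4p2:
  fixes \<beta> :: real
  assumes "\<beta> > 0"
  shows "\<not> (\<exists>lam. Re lam > -1 \<and> lam \<notin> {0, 1} \<and> is_eigenvalue_L2 \<beta> lam)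
         \<and> (\<forall>\<kappa>. mode_stable \<beta> \<kappa>)"
proof -
  have main: False if lam: "Re lam > -1" "lam \<notin> {0,1}" "is_eigenvalue_L2 \<beta> lam" for lam
  proof -
    obtain D where ch0: "smooth_chain_cl D" and nz: "\<exists>y\<in>{-1..1}. D 0 y \<noteq> 0"
      and ode: "\<forall>y\<in>{-1..1}. eig_ode \<beta> lam (D 0) (D 1) (D 2) y"
      using lam(3) unfolding is_eigenvalue_L2_def by blast
    have ch: "\<And>k y. y \<in> {-1..1} \<Longrightarrow> (D k has_vector_derivative D (Suc k) y) (at y within {-1..1})"
      using ch0 unfolding smooth_chain_cl_def by blast
    define e where "e = 1 - \<beta>"
    define dd where "dd = (\<lambda>y::real. 1 + \<beta> + y * e)"
    have ddpos: "dd y > 0" if y: "y \<in> {-1..1}" for y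
    proof -
      have "dd y = (1 + y) + \<beta> * (1 - y)" by (simp add: dd_def e_def algebra_simps)
      moreover have "\<beta> * (1 - y) \<ge> 0" using y assms by simp
      moreover have "y = -1 \<Longrightarrow> \<beta> * (1 - y) > 0" using assms by simp
      ultimately show ?thesis using y by (cases "y = -1") auto
    qed
    define Q where "Q = (\<lambda>k y. of_real (real k * e) * D (k-1) y + of_real (dd y) * D k y)"
    have chQ: "\<forall>k. \<forall>y\<in>{-1..1}. (Q k has_vector_derivative Q (Suc k) y) (at y within {-1..1})"
    proof (intro allI ballI)
      fix k and y :: real assume y: "y \<in> {-1..1}"
      show "(Q k has_vector_derivative Q (Suc k) y) (at y within {-1..1})"
      proof (cases k)
        case 0
        show ?thesis unfolding Q_def dd_def 0
          by (rule derivative_eq_intros ch[OF y] refl | simp)+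
      next
        case (Suc m)
        show ?thesis unfolding Q_def dd_def Suc
          by (rule derivative_eq_intros ch[OF y] refl | simp)+ (simp add: algebra_simps)
      qed
    qed
    have ode0: "\<forall>y\<in>{-1..1}. of_real (y^2-1) * Q (0+2) y + 2*lam* of_real y * Q (0+1) y + lam * (lam-1) * Q 0 y = 0"
    proof
      fix y :: real assume y: "y \<in> {-1..1}"
      have d0: "dd y \<noteq> 0" using ddpos[OF y] by simp
      have E: "eig_ode \<beta> lam (D 0) (D 1) (D 2) y" using ode y by blast
      define b where "b = (of_real \<beta> :: complex)"
      define z where "z = (of_real y :: complex)"
      have dz: "1 + b + z*(1-b) = of_real (dd y)" by (simp add: b_def z_def dd_def e_def)
      note A = alg[where lam=lam and b=b and z=z and pa="D 0 y" and pb="D 1 y" and pc="D 2 y"]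
      have E2: "(lam^2+lam - 2*lam*(1+b)/(1+b+z*(1-b)))*D 0 y + (2*lam*z + 2*z - 2*(1+b)*z/(1+b+z*(1-b)) - 2*(1-b)/(1+b+z*(1-b)))*D 1 y + (z^2-1)*D 2 y = 0"
        using E unfolding eig_ode_def Let_def by (simp add: b_def z_def)
      have "of_real (y^2-1) * Q (0+2) y + 2*lam* of_real y * Q (0+1) y + lam * (lam-1) * Q 0 y
        = (z^2-1) * ((2*(1-b)) * D 1 y + (1+b+z*(1-b))*D 2 y) + 2*lam*z*((1-b)*D 0 y + (1+b+z*(1-b))*D 1 y) + lam*(lam-1)*((1+b+z*(1-b))*D 0 y)"
        unfolding dz by (simp add: Q_def e_def b_def z_def numeral_2_eq_2)
      also have "\<dots> = 0" using A E2 dz d0 by simp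
      finally show "of_real (y^2-1) * Q (0+2) y + 2*lam* of_real y * Q (0+1) y + lam * (lam-1) * Q 0 y = 0" .
    qed
    have ode1': "\<forall>y\<in>{-1..1}. of_real (y^2-1) * Q (0+3) y + 2*(lam+1)* of_real y * Q (0+2) y + (lam+1) * lam * Q (0+1) y = 0"
      by (rule ode_step[OF chQ ode0])
    have ode1: "\<forall>y\<in>{-1..1}. of_real (y^2-1) * Q (1+2) y + 2*(lam+1)* of_real y * Q (1+1) y + (lam+1) * ((lam+1)-1) * Q 1 y = 0"
      using ode1' by (simp add: numeral_3_eq_3)
    have ode2: "\<forall>y\<in>{-1..1}. of_real (y^2-1) * Q (1+3) y + 2*((lam+1)+1)* of_real y * Q (1+2) y + ((lam+1)+1) * (lam+1) * Q (1+1) y = 0"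
      by (rule ode_step[OF chQ ode1])
    define eta where "eta = (\<lambda>y. of_real (1+y) * Q 3 y + (lam+1) * Q 2 y)"
    define eta' where "eta' = (\<lambda>y. of_real (1+y) * Q 4 y + (lam+2) * Q 3 y)"
    have deta: "\<forall>y\<in>{-1..1}. (eta has_vector_derivative eta' y) (at y within {-1..1})"
    proof
      fix y :: real assume y: "y \<in> {-1..1}"
      have q: "\<And>j. (Q j has_vector_derivative Q (Suc j) y) (at y within {-1..1})" using chQ y by auto
      show "(eta has_vector_derivative eta' y) (at y within {-1..1})"
        unfolding eta_def eta'_def
        by (rule derivative_eq_intros q refl | simp)+ (simp add: algebra_simps eval_nat_numeral)
    qed
    have eeq: "\<forall>y\<in>{-1..1}. of_real (1-y) * eta' y = (lam+2) * eta y"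
    proof
      fix y :: real assume y: "y \<in> {-1..1}"
      have o: "of_real (y^2-1) * Q 4 y + 2*(lam+2)* of_real y * Q 3 y + (lam+2) * (lam+1) * Q 2 y = 0"
        using ode2 y by (simp add: algebra_simps eval_nat_numeral)
      have "of_real (1-y) * eta' y - (lam+2) * eta y
         = - (of_real (y^2-1) * Q 4 y + 2*(lam+2)* of_real y * Q 3 y + (lam+2) * (lam+1) * Q 2 y)"
        unfolding eta_def eta'_def by (simp add: algebra_simps power2_eq_square)
      then have "of_real (1-y) * eta' y - (lam+2) * eta y = 0" by (simp only: o minus_zero)
      then show "of_real (1-y) * eta' y = (lam+2) * eta y" by simp
    qed
    have eta0: "\<forall>y\<in>{-1..1}. eta y = 0"
      using mono_zero_right[OF deta eeq] lam(1) by auto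
    have q2eq: "\<forall>y\<in>{-1..1}. of_real (1+y) * Q 3 y = (-(lam+1)) * Q 2 y"
      using eta0 unfolding eta_def by (auto simp: algebra_simps add_eq_0_iff)
    have dq2: "\<forall>y\<in>{-1..1}. (Q 2 has_vector_derivative Q 3 y) (at y within {-1..1})"
      using chQ by (simp add: eval_nat_numeral)
    have Q2: "\<forall>y\<in>{-1..1}. Q 2 y = 0"
      using mono_zero_left[OF dq2 q2eq] lam(1) by auto
    have Q3: "\<forall>y\<in>{-1..1}. Q 3 y = 0"
      using der_zero[OF dq2 Q2] by auto
    have l0: "lam \<noteq> 0" "lam \<noteq> 1" using lam(2) by auto
    have l1: "lam + 1 \<noteq> 0"
    proof
      assume "lam + 1 = 0"
      then have "lam = -1" by (simp add: eq_neg_iff_add_eq_0)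
      then have "Re lam = -1" by simp
      then show False using lam(1) by simp
    qed
    have Q1: "\<forall>y\<in>{-1..1}. Q 1 y = 0"
    proof
      fix y :: real assume y: "y \<in> {-1..1}"
      have "(lam+1) * lam * Q 1 y = 0" using ode1[rule_format, OF y] Q2[rule_format, OF y] Q3[rule_format, OF y] by (simp add: eval_nat_numeral)
      then show "Q 1 y = 0" using l0 l1 by simp
    qed
    have Q0: "\<forall>y\<in>{-1..1}. Q 0 y = 0"
    proof
      fix y :: real assume y: "y \<in> {-1..1}"
      have "lam * (lam - 1) * Q 0 y = 0" using ode0[rule_format, OF y] Q2[rule_format, OF y] Q1[rule_format, OF y] by (simp add: eval_nat_numeral)
      then show "Q 0 y = 0" using l0 by simp
    qed
    obtain y where y: "y \<in> {-1..1}" "D 0 y \<noteq> 0" using nz by blast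
    have "of_real (dd y) * D 0 y = 0" using Q0 y(1) unfolding Q_def by simp
    then show False using ddpos[OF y(1)] y(2) by simp
  qed
  show ?thesis
  proof
    show "\<not> (\<exists>lam. Re lam > -1 \<and> lam \<notin> {0, 1} \<and> is_eigenvalue_L2 \<beta> lam)" using main by blast
    show "\<forall>\<kappa>. mode_stable \<beta> \<kappa>" unfolding mode_stable_def
      using main by force
  qed
qed

end
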